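(* Let $\mathcal{F}\subseteq[\omega]^{<\omega}$ be a compact hereditary family covering $\omega$. A vector $y\in X^{\mathcal{F}}$ is an extreme point of the unit ball $B_{X^\mathcal{F}}=\{x\in X^\mathcal{F}:\lVert x\rVert^\mathcal{F}\le1\}$ if and only if there are $F\in\mathcal{F}^{MAX}$ and signs $\varepsilon_i\in\{-1,1\}$ ($i\in F$) such that $y(i)=\varepsilon_i$ for $i\in F$ and $y(i)=0$ for $i\notin F$.
   Context: $\omega=\{1,2,3,\dots\}$; $[\omega]^{<\omega}$ is the family of finite subsets of $\omega$, identified with elements of $2^\omega$; compact means compact in $2^\omega$; hereditary means closed under subsets. A partition is a family $\mathcal{P}\subseteq\mathcal{P}(\omega)$ with $\emptyset\in\mathcal{P}$, $\bigcup\mathcal{P}=\omega$, elements pairwise disjoint; $\mathbb{P}_\mathcal{F}$ is the set of partitions contained in $\mathcal{F}$. For $x\in\mathbb{R}^\omega$, $\lVert x\rVert^{\mathcal{F}}=\inf_{\mathcal{P}\in\mathbb{P}_\mathcal{F}}\sum_{F\in\mathcal{P}}\sup_{k\in F}|x(k)|$. $X^\mathcal{F}=\{x\in\mathbb{R}^\omega:\lim_n\lVert P_{\omega\setminus n}x\rVert^\mathcal{F}=0\}$, where $P_{\omega\setminus n}x$ agrees with $x$ on $\{n+1,\dots\}$ and is zero elsewhere. $\mathcal{F}^{MAX}$ is the set of maximal elements of $\mathcal{F}$, i.e. $F\in\mathcal{F}$ with $F\cup\{k\}\notin\mathcal{F}$ for every $k\in\omega\setminus F$. A point $e$ of a set $K$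 (not necessarily convex) is an extreme point of $K$ if there are no $x,z\in K$ different from $e$ and $t\in(0,1)$ with $e=(1-t)x+tz$. *)

theory Defs
  imports "HOL-Analysis.Analysis"
begin

text \<open>omega is rendered as the type nat (a relabelling of {1,2,3,...}).\<close>

definition cantor_top :: "(nat \<Rightarrow> bool) topology" where
  "cantor_top = product_topology (\<lambda>_. discrete_topology UNIV) UNIV"

definition compact_family :: "nat set set \<Rightarrow> bool" where
  "compact_family \<F> \<longleftrightarrow> compactin cantor_top ((\<lambda>A n. n \<in> A) ` \<F>)"

definition hereditary :: "nat set set \<Rightarrow> bool" where
  "hereditary \<F> \<longleftrightarrow> (\<forall>A \<in> \<F>. \<forall>B. B \<subseteq> A \<longrightarrow> B \<in> \<F>)"

definition is_partition :: "nat set set \<Rightarrow> bool" where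
  "is_partition \<P> \<longleftrightarrow> {} \<in> \<P> \<and> \<Union>\<P> = UNIV \<and>
     (\<forall>A \<in> \<P>. \<forall>B \<in> \<P>. A \<noteq> B \<longrightarrow> A \<inter> B = {})"

definition partitions_in :: "nat set set \<Rightarrow> nat set set set" where
  "partitions_in \<F> = {\<P>. is_partition \<P> \<and> \<P> \<subseteq> \<F>}"

text \<open>The (extended) norm; values in ennreal so that the infinite sums and
  infimum are always defined (sup over the empty set is 0).\<close>
definition normF :: "nat set set \<Rightarrow> (nat \<Rightarrow> real) \<Rightarrow> ennreal" where
  "normF \<F> x = (INF \<P> \<in> partitions_in \<F>.
      (\<Sum>\<^sub>\<infinity> A\<in>\<P>. (SUP k\<in>A. ennreal \<bar>x k\<bar>)))"

definition tailproj :: "nat \<Rightarrow> (nat \<Rightarrow> real) \<Rightarrow> (nat \<Rightarrow> real)" where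
  "tailproj n x = (\<lambda>k. if n < k then x k else 0)"

definition XF :: "nat set set \<Rightarrow> (nat \<Rightarrow> real) set" where
  "XF \<F> = {x. (\<lambda>n. normF \<F> (tailproj n x)) \<longlonglongrightarrow> 0}"

definition unit_ball_XF :: "nat set set \<Rightarrow> (nat \<Rightarrow> real) set" where
  "unit_ball_XF \<F> = {x \<in> XF \<F>. normF \<F> x \<le> 1}"

definition maximal_elems :: "nat set set \<Rightarrow> nat set set" where
  "maximal_elems \<F> = {F \<in> \<F>. \<forall>k. k \<notin> F \<longrightarrow> insert k F \<notin> \<F>}"

definition extreme_pt :: "(nat \<Rightarrow> real) \<Rightarrow> (nat \<Rightarrow> real) set \<Rightarrow> bool" where
  "extreme_pt e K \<longleftrightarrow> e \<in> K \<and>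
     \<not> (\<exists>x \<in> K. \<exists>z \<in> K. \<exists>t::real. x \<noteq> e \<and> z \<noteq> e \<and> 0 < t \<and> t < 1 \<and>
          e = (\<lambda>i. (1 - t) * x i + t * z i))"

end

theory Submission
  imports Defs "HOL-Library.Diagonal_Subsequence" "HOL-Library.Infinite_Set"
begin


lemma ennsum[simp]: "(f :: 'a \<Rightarrow> ennreal) summable_on P"
  by (rule nonneg_summable_on_complete) simp

definition SP :: "nat set set \<Rightarrow> (nat \<Rightarrow> real) \<Rightarrow> ennreal" where
  "SP P x = (\<Sum>\<^sub>\<infinity> A\<in>P. (SUP k\<in>A. ennreal \<bar>x k\<bar>))"

lemma normF_le_SP: "P \<in> partitions_in \<F> \<Longrightarrow> normF \<F> x \<le> SP P x"
  unfolding normF_def SP_def by (rule INF_lower)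

lemma sum_le_SP:
  assumes "finite D" "D \<subseteq> P"
  shows "(\<Sum>A\<in>D. (SUP k\<in>A. ennreal \<bar>x k\<bar>)) \<le> SP P x"
proof -
  have "(\<Sum>A\<in>D. (SUP k\<in>A. ennreal \<bar>x k\<bar>)) = (\<Sum>\<^sub>\<infinity> A\<in>D. (SUP k\<in>A. ennreal \<bar>x k\<bar>))"
    using assms by simp
  also have "\<dots> \<le> SP P x" unfolding SP_def
    by (rule infsum_mono_neutral) (use assms in auto)
  finally show ?thesis .
qed

lemma coord_le_SP:
  assumes "is_partition P"
  shows "ennreal \<bar>x k\<bar> \<le> SP P x"
proof -
  obtain A where A: "A \<in> P" "k \<in> A" using assms unfolding is_partition_def by blast
  have "ennreal \<bar>x k\<bar> \<le> (SUP k\<in>A. ennreal \<bar>x k\<bar>)" using A by (intro SUP_upper)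
  also have "\<dots> = (\<Sum>A\<in>{A}. (SUP k\<in>A. ennreal \<bar>x k\<bar>))" by simp
  also have "\<dots> \<le> SP P x" using A by (intro sum_le_SP) auto
  finally show ?thesis .
qed

lemma coord_le_normF: "ennreal \<bar>x k\<bar> \<le> normF \<F> x"
  unfolding normF_def
proof (rule INF_greatest)
  fix P assume "P \<in> partitions_in \<F>"
  then have "is_partition P" unfolding partitions_in_def by simp
  from coord_le_SP[OF this, of x k]
  show "ennreal \<bar>x k\<bar> \<le> (\<Sum>\<^sub>\<infinity> A\<in>P. (SUP k\<in>A. ennreal \<bar>x k\<bar>))"
    unfolding SP_def .
qed

lemma two_coords_le_SP:
  assumes "A \<in> P" "B \<in> P" "A \<noteq> B" "a \<in> A" "b \<in> B"
  shows "ennreal \<bar>x a\<bar> + ennreal \<bar>x b\<bar> \<le> SP P x"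
proof -
  have "ennreal \<bar>x a\<bar> + ennreal \<bar>x b\<bar> \<le> (SUP k\<in>A. ennreal \<bar>x k\<bar>) + (SUP k\<in>B. ennreal \<bar>x k\<bar>)"
    using assms by (intro add_mono SUP_upper)
  also have "\<dots> = (\<Sum>C\<in>{A,B}. (SUP k\<in>C. ennreal \<bar>x k\<bar>))" using assms by simp
  also have "\<dots> \<le> SP P x" using assms by (intro sum_le_SP) auto
  finally show ?thesis .
qed

lemma SP_box:
  assumes P: "is_partition P" and G: "G \<in> P" and z: "\<And>k. k \<notin> G \<Longrightarrow> x k = 0"
    and b: "\<And>k. \<bar>x k\<bar> \<le> 1"
  shows "SP P x \<le> 1"
proof -
  have "SP P x = (\<Sum>\<^sub>\<infinity> A\<in>{G}. (SUP k\<in>A. ennreal \<bar>x k\<bar>))"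
    unfolding SP_def
  proof (rule infsum_cong_neutral)
    fix A assume A: "A \<in> P - {G}"
    then have "A \<inter> G = {}" using P G unfolding is_partition_def by blast
    then have "\<forall>k\<in>A. x k = 0" using z by blast
    then show "(SUP k\<in>A. ennreal \<bar>x k\<bar>) = 0"
      by (cases "A = {}") (auto simp: bot_ennreal)
  qed (use G in auto)
  also have "\<dots> = (SUP k\<in>G. ennreal \<bar>x k\<bar>)" by simp
  also have "\<dots> \<le> 1" using b by (intro SUP_least) auto
  finally show ?thesis .
qed

lemma box_normF:
  assumes "P \<in> partitions_in \<F>" "G \<in> P" "\<And>k. k \<notin> G \<Longrightarrow> x k = 0" "\<And>k. \<bar>x k\<bar> \<le> 1"
  shows "normF \<F> x \<le> 1"
proof -
  have "is_partition P" using assms(1) unfolding partitions_in_def by simp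
  then have "SP P x \<le> 1" using assms(2-4) by (rule SP_box)
  with normF_le_SP[OF assms(1), of x] show ?thesis by (rule order_trans)
qed

lemma singleton_in:
  assumes "hereditary \<F>" "\<Union>\<F> = UNIV"
  shows "{j} \<in> \<F>"
proof -
  have "j \<in> \<Union>\<F>" using assms(2) by simp
  then obtain A where "A \<in> \<F>" "j \<in> A" by blast
  then show ?thesis using assms(1) unfolding hereditary_def by blast
qed

lemma std_partition:
  assumes "G \<in> \<F>" "hereditary \<F>" "\<Union>\<F> = UNIV"
  shows "{G} \<union> {{j} |j. j \<notin> G} \<union> {{}} \<in> partitions_in \<F>"
proof -
  let ?P = "{G} \<union> {{j} |j. j \<notin> G} \<union> {{}}"
  have e: "{} \<in> \<F>" using assms(1,2) unfolding hereditary_def by blast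
  have s: "\<And>j. {j} \<in> \<F>" using singleton_in[OF assms(2,3)] .
  have sub: "?P \<subseteq> \<F>" using e s assms(1) by blast
  have un: "\<Union>?P = UNIV"
  proof (rule set_eqI)
    fix j show "j \<in> \<Union>?P \<longleftrightarrow> j \<in> UNIV" by (cases "j \<in> G") blast+
  qed
  have dj: "\<forall>A \<in> ?P. \<forall>B \<in> ?P. A \<noteq> B \<longrightarrow> A \<inter> B = {}" by blast
  show ?thesis unfolding partitions_in_def is_partition_def using sub un dj by blast
qed

lemma finmod_XF:
  assumes "x \<in> XF \<F>" "finite D" "\<And>k. k \<notin> D \<Longrightarrow> z k = x k"
  shows "z \<in> XF \<F>"
proof -
  obtain M where M: "\<And>k. k \<in> D \<Longrightarrow> k \<le> M"
    using assms(2) finite_nat_set_iff_bounded_le by auto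
  have ev: "\<forall>\<^sub>F n in sequentially. normF \<F> (tailproj n x) = normF \<F> (tailproj n z)"
  proof (rule eventually_mono[OF eventually_ge_at_top[of M]])
    fix n assume n: "M \<le> n"
    have "tailproj n x = tailproj n z"
    proof (rule ext)
      fix k show "tailproj n x k = tailproj n z k"
      proof (cases "n < k")
        case True
        have "k \<notin> D"
        proof
          assume "k \<in> D" then have "k \<le> M" by (rule M)
          with n True show False by simp
        qed
        then show ?thesis using True assms(3) unfolding tailproj_def by simp
      qed (simp add: tailproj_def)
    qed
    then show "normF \<F> (tailproj n x) = normF \<F> (tailproj n z)" by simp
  qed
  have tx: "(\<lambda>n. normF \<F> (tailproj n x)) \<longlonglongrightarrow> 0" using assms(1) unfolding XF_def by simp
  have "(\<lambda>n. normF \<F> (tailproj n z)) \<longlonglongrightarrow> 0"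
    by (rule Lim_transform_eventually[OF tx ev])
  then show ?thesis unfolding XF_def by simp
qed



lemma compact_no_infinite:
  assumes fin: "\<forall>A \<in> \<F>. finite A" and cf: "compact_family \<F>"
    and sub: "\<And>T. finite T \<Longrightarrow> T \<subseteq> S \<Longrightarrow> T \<in> \<F>"
  shows "finite S"
proof -
  have cl: "closedin cantor_top ((\<lambda>A n. n \<in> A) ` \<F>)"
    using cf unfolding compact_family_def cantor_top_def
    by (intro compactin_imp_closedin) (simp add: Hausdorff_space_product_topology)
  define f where "f = (\<lambda>N::nat. (\<lambda>k. k \<in> S \<inter> {..N}))"
  have lim: "limitin cantor_top f (\<lambda>k. k \<in> S) sequentially"
    unfolding cantor_top_def limitin_componentwise
  proof (intro conjI ballI)
    fix k :: nat
    show "limitin (discrete_topology UNIV) (\<lambda>c. f c k) (k \<in> S) sequentially"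
      unfolding limitin_def
    proof (intro conjI allI impI)
      fix U assume "openin (discrete_topology UNIV) U \<and> (k \<in> S) \<in> U"
      then have "(k\<in>S) \<in> U" by blast
      moreover have "\<forall>\<^sub>F N in sequentially. f N k = (k \<in> S)"
        using eventually_ge_at_top[of k] by (rule eventually_mono) (auto simp: f_def)
      ultimately show "\<forall>\<^sub>F N in sequentially. f N k \<in> U"
        by (auto elim: eventually_mono)
    qed auto
  qed auto
  have ev: "\<forall>\<^sub>F N in sequentially. f N \<in> (\<lambda>A n. n \<in> A) ` \<F>"
  proof (intro always_eventually allI)
    fix N
    have "S \<inter> {..N} \<in> \<F>" by (intro sub) auto
    then show "f N \<in> (\<lambda>A n. n \<in> A) ` \<F>" unfolding f_def by blast
  qed
  have "(\<lambda>k. k \<in> S) \<in> (\<lambda>A n. n \<in> A) ` \<F>"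
    by (rule limitin_closedin[OF lim cl ev]) simp
  then obtain A where "A \<in> \<F>" "(\<lambda>k. k \<in> S) = (\<lambda>n. n \<in> A)" by (rule imageE)
  then have "\<forall>n. (n \<in> S) = (n \<in> A)" by (simp add: fun_eq_iff)
  then have "A = S" by (intro set_eqI) simp
  with fin \<open>A \<in> \<F>\<close> show ?thesis by blast
qed



definition evconst :: "(nat \<Rightarrow> nat \<Rightarrow> bool) \<Rightarrow> nat \<Rightarrow> (nat \<Rightarrow> nat) \<Rightarrow> bool" where
  "evconst b k s \<longleftrightarrow> (\<forall>\<^sub>F m in sequentially. b k (s m)) \<or> (\<forall>\<^sub>F m in sequentially. \<not> b k (s m))"

lemma evconst_sub:
  fixes s :: "nat \<Rightarrow> nat" and b :: "nat \<Rightarrow> nat \<Rightarrow> bool"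
  assumes "strict_mono s"
  shows "\<exists>r. strict_mono r \<and> evconst b k (s \<circ> r)"
proof (cases "infinite {m. b k (s m)}")
  case True
  then obtain r :: "nat \<Rightarrow> nat" where r: "strict_mono r" "\<forall>n. r n \<in> {m. b k (s m)}"
    using infinite_enumerate by blast
  then have "evconst b k (s \<circ> r)" unfolding evconst_def by (auto intro: always_eventually)
  with r show ?thesis by blast
next
  case False
  then obtain M where M: "\<And>m. m \<in> {m. b k (s m)} \<Longrightarrow> m \<le> M"
    using finite_nat_set_iff_bounded_le by auto
  have "\<forall>\<^sub>F m in sequentially. \<not> b k (s m)"
    unfolding eventually_sequentially
  proof (intro exI allI impI)
    fix m assume "Suc M \<le> m"
    then show "\<not> b k (s m)" using M[of m] by auto
  qed
  then have "evconst b k (s \<circ> id)" unfolding evconst_def by simp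
  then show ?thesis using strict_mono_id by blast
qed

lemma evconst_stable:
  fixes s r :: "nat \<Rightarrow> nat"
  assumes "strict_mono r" "evconst b k s"
  shows "evconst b k (s \<circ> r)"
proof -
  have fl: "filterlim r sequentially sequentially" using assms(1) by (rule filterlim_subseq)
  have "(\<forall>\<^sub>F m in sequentially. b k (s m)) \<or> (\<forall>\<^sub>F m in sequentially. \<not> b k (s m))"
    using assms(2) unfolding evconst_def .
  then show ?thesis
  proof
    assume "\<forall>\<^sub>F m in sequentially. b k (s m)"
    from eventually_compose_filterlim[OF this fl] show ?thesis by (simp add: evconst_def)
  next
    assume "\<forall>\<^sub>F m in sequentially. \<not> b k (s m)"
    from eventually_compose_filterlim[OF this fl] show ?thesis by (simp add: evconst_def)
  qed
qed

lemma evconst_shift: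
  assumes "evconst b k (\<lambda>m. s (m + c))"
  shows "evconst b k s"
  using assms unfolding evconst_def
  using eventually_sequentially_seg[of "\<lambda>m. b k (s m)" c]
        eventually_sequentially_seg[of "\<lambda>m. \<not> b k (s m)" c]
  by simp

lemma diag_const:
  fixes b :: "nat \<Rightarrow> nat \<Rightarrow> bool"
  shows "\<exists>\<sigma>. strict_mono \<sigma> \<and> (\<forall>k. evconst b k \<sigma>)"
proof -
  interpret subseqs "evconst b"
    by unfold_locales (rule evconst_sub)
  have "evconst b k diagseq" for k
  proof -
    have "evconst b k (diagseq \<circ> ((+) (Suc k)))"
      by (rule diagseq_holds) (rule evconst_stable)
    then have "evconst b k (\<lambda>m. diagseq (m + Suc k))" by (simp add: o_def add.commute)
    then show ?thesis by (rule evconst_shift)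
  qed
  then show ?thesis using subseq_diagseq by blast
qed



lemma ball_coord: "x \<in> unit_ball_XF \<F> \<Longrightarrow> \<bar>x k\<bar> \<le> 1"
proof -
  assume "x \<in> unit_ball_XF \<F>"
  then have "normF \<F> x \<le> 1" unfolding unit_ball_XF_def by simp
  with coord_le_normF[of x k \<F>] have "ennreal \<bar>x k\<bar> \<le> 1" by (rule order_trans)
  then show ?thesis by (simp add: ennreal_le_1)
qed

lemma easy_dir:
  assumes her: "hereditary \<F>" and cov: "\<Union>\<F> = UNIV" and yX: "y \<in> XF \<F>"
    and G: "G \<in> maximal_elems \<F>" and eps: "\<forall>i \<in> G. \<epsilon> i \<in> {-1, 1}"
    and yG: "\<forall>i \<in> G. y i = \<epsilon> i" and y0: "\<forall>i. i \<notin> G \<longrightarrow> y i = 0"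
  shows "extreme_pt y (unit_ball_XF \<F>)"
proof -
  have GF: "G \<in> \<F>" and Gmax: "\<And>k. k \<notin> G \<Longrightarrow> insert k G \<notin> \<F>"
    using G unfolding maximal_elems_def by auto
  have yb: "\<And>k. \<bar>y k\<bar> \<le> 1"
  proof -
    fix k show "\<bar>y k\<bar> \<le> 1" using eps yG y0 by (cases "k \<in> G") auto
  qed
  have "normF \<F> y \<le> 1"
    by (rule box_normF[OF std_partition[OF GF her cov], of G]) (use y0 yb in auto)
  then have yK: "y \<in> unit_ball_XF \<F>" using yX unfolding unit_ball_XF_def by simp
  have key: "x = y" if xK: "x \<in> unit_ball_XF \<F>" and zK: "z \<in> unit_ball_XF \<F>"
    and t: "0 < t" "t < 1" and comb: "y = (\<lambda>i. (1 - t) * x i + t * z i)" for x z t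
  proof -
    have xb: "\<And>k. \<bar>x k\<bar> \<le> 1" using ball_coord[OF xK] .
    have zb: "\<And>k. \<bar>z k\<bar> \<le> 1" using ball_coord[OF zK] .
    have onG: "x i = y i" if i: "i \<in> G" for i
    proof -
      define s where "s = y i"
      have s: "s = 1 \<or> s = -1" using eps yG i unfolding s_def by auto
      have yi: "y i = (1 - t) * x i + t * z i" using comb by (simp add: fun_eq_iff)
      have "s * s = 1" using s by auto
      have a: "s * x i \<le> 1" "s * z i \<le> 1" using s xb[of i] zb[of i] by (auto simp: abs_le_iff)
      have "1 = s * y i" using s s_def by auto
      also have "\<dots> = (1 - t) * (s * x i) + t * (s * z i)" unfolding yi by (simp add: algebra_simps)
      finally have e: "(1 - t) * (1 - s * x i) + t * (1 - s * z i) = 0" by (simp add: algebra_simps)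
      have p1: "(1 - t) * (1 - s * x i) \<ge> 0" using t a by simp
      have p2: "t * (1 - s * z i) \<ge> 0" using t a by simp
      have "(1 - t) * (1 - s * x i) = 0" using e p1 p2 by linarith
      then have "s * x i = 1" using t by simp
      then show ?thesis using s s_def by auto
    qed
    have Gne: "G \<noteq> {}"
    proof
      assume "G = {}"
      then have "insert 0 G \<notin> \<F>" using Gmax by simp
      then show False using singleton_in[OF her cov, of 0] \<open>G = {}\<close> by simp
    qed
    have offG: "x j = 0" if j: "j \<notin> G" for j
    proof -
      have "ennreal (1 + \<bar>x j\<bar>) \<le> normF \<F> x"
        unfolding normF_def
      proof (rule INF_greatest)
        fix P assume P: "P \<in> partitions_in \<F>"
        then have Pp: "is_partition P" and PF: "P \<subseteq> \<F>" unfolding partitions_in_def by auto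
        have "j \<in> \<Union>P" using Pp unfolding is_partition_def by simp
        then obtain Aj where Aj: "Aj \<in> P" "j \<in> Aj" by blast
        have "\<not> G \<subseteq> Aj"
        proof
          assume "G \<subseteq> Aj"
          then have "insert j G \<subseteq> Aj" using Aj by auto
          moreover have "Aj \<in> \<F>" using Aj PF by auto
          ultimately have "insert j G \<in> \<F>" using her unfolding hereditary_def by blast
          then show False using Gmax j by blast
        qed
        then obtain g where g: "g \<in> G" "g \<notin> Aj" by blast
        have "g \<in> \<Union>P" using Pp unfolding is_partition_def by simp
        then obtain Ag where Ag: "Ag \<in> P" "g \<in> Ag" by blast
        have "Ag \<noteq> Aj" using Ag g by auto
        from two_coords_le_SP[OF Ag(1) Aj(1) this Ag(2) Aj(2), of x]
        have "ennreal \<bar>x g\<bar> + ennreal \<bar>x j\<bar> \<le> SP P x" .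
        moreover have "\<bar>x g\<bar> = 1" using onG[OF g(1)] eps yG g(1) by auto
        ultimately show "ennreal (1 + \<bar>x j\<bar>) \<le> (\<Sum>\<^sub>\<infinity> A\<in>P. (SUP k\<in>A. ennreal \<bar>x k\<bar>))"
        proof -
          have "ennreal (1 + \<bar>x j\<bar>) = ennreal 1 + ennreal \<bar>x j\<bar>"
            by (rule ennreal_plus) auto
          also have "\<dots> = ennreal \<bar>x g\<bar> + ennreal \<bar>x j\<bar>" using \<open>\<bar>x g\<bar> = 1\<close> by simp
          also have "\<dots> \<le> SP P x" by fact
          finally show ?thesis unfolding SP_def .
        qed
      qed
      also have "\<dots> \<le> 1" using xK unfolding unit_ball_XF_def by simp
      finally have "1 + \<bar>x j\<bar> \<le> 1" by (simp add: ennreal_le_1)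
      then show ?thesis by simp
    qed
    show "x = y"
    proof (rule ext)
      fix k show "x k = y k" using onG offG y0 by (cases "k \<in> G") auto
    qed
  qed
  show ?thesis unfolding extreme_pt_def using yK key by blast
qed



lemma SUP_empty_ennreal: "(SUP k\<in>{}. f k) = (0::ennreal)"
  by (simp add: bot_ennreal)

lemma attain:
  assumes fin: "\<forall>A \<in> \<F>. finite A" and cf: "compact_family \<F>" and her: "hereditary \<F>"
    and cov: "\<Union>\<F> = UNIV" and n1: "normF \<F> y \<le> 1"
  shows "\<exists>P \<in> partitions_in \<F>. SP P y \<le> 1"
proof -
  define f where "f = (\<lambda>A::nat set. SUP k\<in>A. ennreal \<bar>y k\<bar>)"
  have exP: "\<exists>P \<in> partitions_in \<F>. SP P y < ennreal (1 + 1 / (real n + 1))" for n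
  proof -
    have "normF \<F> y < ennreal (1 + 1 / (real n + 1))"
    proof (rule le_less_trans[OF n1])
      show "1 < ennreal (1 + 1 / (real n + 1))"
        using ennreal_less_iff[of 1 "1 + 1 / (real n + 1)"] by simp
    qed
    then show ?thesis unfolding normF_def SP_def INF_less_iff .
  qed
  define PP where "PP n = (SOME P. P \<in> partitions_in \<F> \<and> SP P y < ennreal (1 + 1 / (real n + 1)))" for n
  have PP0: "PP n \<in> partitions_in \<F> \<and> SP (PP n) y < ennreal (1 + 1 / (real n + 1))" for n
  proof -
    from exP[of n]
    have "\<exists>P. P \<in> partitions_in \<F> \<and> SP P y < ennreal (1 + 1 / (real n + 1))" by blast
    then show ?thesis unfolding PP_def by (rule someI_ex)
  qed
  have PP: "\<And>n. PP n \<in> partitions_in \<F>" using PP0 by blast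
  have PPs: "\<And>n. SP (PP n) y < ennreal (1 + 1 / (real n + 1))" using PP0 by blast
  have PPp: "is_partition (PP n)" and PPF: "PP n \<subseteq> \<F>" for n
    using PP[of n] unfolding partitions_in_def by auto
  define blk where "blk n i = (SOME A. A \<in> PP n \<and> i \<in> A)" for n i
  have blk: "blk n i \<in> PP n \<and> i \<in> blk n i" for n i
  proof -
    have "i \<in> \<Union>(PP n)" using PPp[of n] unfolding is_partition_def by simp
    then have "\<exists>A. A \<in> PP n \<and> i \<in> A" by blast
    then show ?thesis unfolding blk_def by (rule someI_ex)
  qed
  have blk_uniq: "blk n i = A" if "A \<in> PP n" "i \<in> A" for n i A
  proof (rule ccontr)
    assume "blk n i \<noteq> A"
    then have "blk n i \<inter> A = {}" using PPp[of n] blk[of n i] that unfolding is_partition_def by blast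
    then show False using blk[of n i] that by blast
  qed
  obtain \<sigma> where \<sigma>: "strict_mono \<sigma>"
    and ec: "\<And>k. evconst (\<lambda>k m. snd (prod_decode k) \<in> blk m (fst (prod_decode k))) k \<sigma>"
    using diag_const by blast
  have const: "(\<forall>\<^sub>F m in sequentially. j \<in> blk (\<sigma> m) i) \<or> (\<forall>\<^sub>F m in sequentially. j \<notin> blk (\<sigma> m) i)" for i j
    using ec[of "prod_encode (i, j)"] unfolding evconst_def by simp
  define B where "B i = {j. \<forall>\<^sub>F m in sequentially. j \<in> blk (\<sigma> m) i}" for i
  have iB: "i \<in> B i" for i unfolding B_def using blk by simp
  have Beq: "B j = B i" if "j \<in> B i" for i j
  proof -
    have ev: "\<forall>\<^sub>F m in sequentially. blk (\<sigma> m) j = blk (\<sigma> m) i"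
    proof -
      have "\<forall>\<^sub>F m in sequentially. j \<in> blk (\<sigma> m) i" using that unfolding B_def by simp
      then show ?thesis by (rule eventually_mono) (rule blk_uniq[OF blk[THEN conjunct1]])
    qed
    show ?thesis
    proof (rule set_eqI)
      fix l
      show "l \<in> B j \<longleftrightarrow> l \<in> B i"
      proof
        assume "l \<in> B j"
        then have "\<forall>\<^sub>F m in sequentially. l \<in> blk (\<sigma> m) j" unfolding B_def by simp
        with ev have "\<forall>\<^sub>F m in sequentially. l \<in> blk (\<sigma> m) i" by (rule eventually_elim2) simp
        then show "l \<in> B i" unfolding B_def by simp
      next
        assume "l \<in> B i"
        then have "\<forall>\<^sub>F m in sequentially. l \<in> blk (\<sigma> m) i" unfolding B_def by simp
        with ev have "\<forall>\<^sub>F m in sequentially. l \<in> blk (\<sigma> m) j" by (rule eventually_elim2) simp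
        then show "l \<in> B j" unfolding B_def by simp
      qed
    qed
  qed
  have finsubF: "T \<in> \<F>" if "finite T" "T \<subseteq> B i" for T i
  proof -
    have "\<forall>l\<in>T. \<forall>\<^sub>F m in sequentially. l \<in> blk (\<sigma> m) i" using that unfolding B_def by blast
    then have "\<forall>\<^sub>F m in sequentially. \<forall>l\<in>T. l \<in> blk (\<sigma> m) i"
      by (rule eventually_ball_finite[OF that(1)])
    then obtain m where "\<forall>l\<in>T. l \<in> blk (\<sigma> m) i" using eventually_sequentially by auto
    moreover have "blk (\<sigma> m) i \<in> \<F>" using blk PPF by blast
    ultimately show ?thesis using her unfolding hereditary_def by blast
  qed
  have Bfin: "finite (B i)" for i
    by (rule compact_no_infinite[OF fin cf]) (rule finsubF)
  have BF: "B i \<in> \<F>" for i using finsubF[OF Bfin] by blast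
  define Q where "Q = range B \<union> {{}}"
  have eF: "{} \<in> \<F>" using her BF unfolding hereditary_def by blast
  have Qp: "is_partition Q"
    unfolding is_partition_def
  proof (intro conjI ballI impI)
    show "{} \<in> Q" unfolding Q_def by simp
    show "\<Union> Q = UNIV"
    proof (rule set_eqI)
      fix l show "l \<in> \<Union> Q \<longleftrightarrow> l \<in> UNIV" using iB[of l] unfolding Q_def by blast
    qed
  next
    fix C D assume "C \<in> Q" "D \<in> Q" "C \<noteq> D"
    show "C \<inter> D = {}"
    proof (rule ccontr)
      assume "C \<inter> D \<noteq> {}"
      then obtain l where l: "l \<in> C" "l \<in> D" by blast
      then have "C \<noteq> {}" "D \<noteq> {}" by auto
      then obtain a b where ab: "C = B a" "D = B b" using \<open>C \<in> Q\<close> \<open>D \<in> Q\<close> unfolding Q_def by blast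
      have la: "l \<in> B a" and lb: "l \<in> B b" using l ab by auto
      have "B l = B a" using la by (rule Beq)
      moreover have "B l = B b" using lb by (rule Beq)
      ultimately have "B a = B b" by simp
      then show False using ab \<open>C \<noteq> D\<close> by simp
    qed
  qed
  have "Q \<subseteq> \<F>" unfolding Q_def using BF eF by auto
  then have QP: "Q \<in> partitions_in \<F>" unfolding partitions_in_def using Qp by simp
  have "SP Q y \<le> 1" unfolding SP_def
  proof (rule infsum_le_finite_sums)
    show "(\<lambda>A. SUP k\<in>A. ennreal \<bar>y k\<bar>) summable_on Q" by simp
  next
    fix D assume D: "finite D" "D \<subseteq> Q"
    define D' where "D' = D - {{}}"
    have D': "finite D'" "D' \<subseteq> range B" using D unfolding D'_def Q_def by auto
    have sD: "(\<Sum>A\<in>D. SUP k\<in>A. ennreal \<bar>y k\<bar>) = (\<Sum>A\<in>D'. SUP k\<in>A. ennreal \<bar>y k\<bar>)"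
      unfolding D'_def using D(1) by (intro sum.mono_neutral_right) (auto simp: bot_ennreal)
    define rep where "rep C = (SOME i. C = B i)" for C
    have rep: "B (rep C) = C" "rep C \<in> C" if "C \<in> D'" for C
    proof -
      have "\<exists>i. C = B i" using that D' by blast
      then have h: "C = B (rep C)" unfolding rep_def by (rule someI_ex)
      then show "B (rep C) = C" by (rule sym)
      show "rep C \<in> C" using h iB by metis
    qed
    have ev1: "\<forall>\<^sub>F m in sequentially. \<forall>C\<in>D'. C \<subseteq> blk (\<sigma> m) (rep C)"
    proof (rule eventually_ball_finite[OF D'(1)], rule ballI)
      fix C assume C: "C \<in> D'"
      have "finite C" using rep(1)[OF C] Bfin by metis
      moreover have "\<forall>l\<in>C. \<forall>\<^sub>F m in sequentially. l \<in> blk (\<sigma> m) (rep C)"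
      proof
        fix l assume "l \<in> C"
        then have "l \<in> B (rep C)" using rep(1)[OF C] by simp
        then show "\<forall>\<^sub>F m in sequentially. l \<in> blk (\<sigma> m) (rep C)" unfolding B_def by simp
      qed
      ultimately have "\<forall>\<^sub>F m in sequentially. \<forall>l\<in>C. l \<in> blk (\<sigma> m) (rep C)"
        by (rule eventually_ball_finite)
      then show "\<forall>\<^sub>F m in sequentially. C \<subseteq> blk (\<sigma> m) (rep C)"
        by (rule eventually_mono) blast
    qed
    have ev2: "\<forall>\<^sub>F m in sequentially. \<forall>C\<in>D'. \<forall>C'\<in>D'. C \<noteq> C' \<longrightarrow> rep C' \<notin> blk (\<sigma> m) (rep C)"
    proof (rule eventually_ball_finite[OF D'(1)], rule ballI)
      fix C assume C: "C \<in> D'"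
      show "\<forall>\<^sub>F m in sequentially. \<forall>C'\<in>D'. C \<noteq> C' \<longrightarrow> rep C' \<notin> blk (\<sigma> m) (rep C)"
      proof (rule eventually_ball_finite[OF D'(1)], rule ballI)
        fix C' assume C': "C' \<in> D'"
        show "\<forall>\<^sub>F m in sequentially. C \<noteq> C' \<longrightarrow> rep C' \<notin> blk (\<sigma> m) (rep C)"
        proof (cases "C = C'")
          case False
          have "rep C' \<notin> B (rep C)"
          proof
            assume "rep C' \<in> B (rep C)"
            then have "B (rep C') = B (rep C)" by (rule Beq)
            then show False using rep(1)[OF C] rep(1)[OF C'] False by simp
          qed
          then have "\<not> (\<forall>\<^sub>F m in sequentially. rep C' \<in> blk (\<sigma> m) (rep C))" unfolding B_def by simp
          then have "\<forall>\<^sub>F m in sequentially. rep C' \<notin> blk (\<sigma> m) (rep C)" using const by blast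
          then show ?thesis by (rule eventually_mono) simp
        qed simp
      qed
    qed
    have bound: "(\<Sum>A\<in>D'. SUP k\<in>A. ennreal \<bar>y k\<bar>) < ennreal (1 + 1 / (real (\<sigma> m) + 1))"
      if h1: "\<forall>C\<in>D'. C \<subseteq> blk (\<sigma> m) (rep C)"
        and h2: "\<forall>C\<in>D'. \<forall>C'\<in>D'. C \<noteq> C' \<longrightarrow> rep C' \<notin> blk (\<sigma> m) (rep C)" for m
    proof -
      define g where "g C = blk (\<sigma> m) (rep C)" for C
      have inj: "inj_on g D'"
      proof (rule inj_onI)
        fix C C' assume C: "C \<in> D'" and C': "C' \<in> D'" and eq: "g C = g C'"
        show "C = C'"
        proof (rule ccontr)
          assume ne: "C \<noteq> C'"
          have "rep C' \<in> g C'" unfolding g_def using blk by simp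
          then have "rep C' \<in> blk (\<sigma> m) (rep C)" using eq unfolding g_def by simp
          then show False using h2 C C' ne by blast
        qed
      qed
      have "(\<Sum>A\<in>D'. SUP k\<in>A. ennreal \<bar>y k\<bar>) \<le> (\<Sum>A\<in>D'. SUP k\<in>g A. ennreal \<bar>y k\<bar>)"
        using h1 unfolding g_def by (intro sum_mono SUP_subset_mono) auto
      also have "\<dots> = (\<Sum>A\<in>g ` D'. SUP k\<in>A. ennreal \<bar>y k\<bar>)"
        using sum.reindex[OF inj, of "\<lambda>A. SUP k\<in>A. ennreal \<bar>y k\<bar>"] by simp
      also have "\<dots> \<le> SP (PP (\<sigma> m)) y"
        by (rule sum_le_SP) (use D'(1) blk in \<open>auto simp: g_def\<close>)
      also have "\<dots> < ennreal (1 + 1 / (real (\<sigma> m) + 1))" by (rule PPs)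
      finally show ?thesis .
    qed
    have evb: "\<forall>\<^sub>F m in sequentially. (\<Sum>A\<in>D'. SUP k\<in>A. ennreal \<bar>y k\<bar>) < ennreal (1 + 1 / (real (\<sigma> m) + 1))"
    proof (rule eventually_mono[OF eventually_conj[OF ev1 ev2]])
      fix m assume "(\<forall>C\<in>D'. C \<subseteq> blk (\<sigma> m) (rep C)) \<and>
        (\<forall>C\<in>D'. \<forall>C'\<in>D'. C \<noteq> C' \<longrightarrow> rep C' \<notin> blk (\<sigma> m) (rep C))"
      then show "(\<Sum>A\<in>D'. SUP k\<in>A. ennreal \<bar>y k\<bar>) < ennreal (1 + 1 / (real (\<sigma> m) + 1))"
        by (elim conjE) (rule bound)
    qed
    have "(\<Sum>A\<in>D'. SUP k\<in>A. ennreal \<bar>y k\<bar>) \<le> 1"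
    proof (rule ennreal_le_epsilon)
      fix e :: real assume e: "0 < e"
      obtain N where N: "\<And>m. m \<ge> N \<Longrightarrow> (\<Sum>A\<in>D'. SUP k\<in>A. ennreal \<bar>y k\<bar>) < ennreal (1 + 1 / (real (\<sigma> m) + 1))"
        using evb unfolding eventually_sequentially by blast
      define m where "m = max N (nat \<lceil>1 / e\<rceil>)"
      have "nat \<lceil>1 / e\<rceil> \<le> m" unfolding m_def by simp
      then have "real (nat \<lceil>1 / e\<rceil>) \<le> real m" by simp
      with real_nat_ceiling_ge[of "1 / e"] have "real m \<ge> 1 / e" by linarith
      moreover have "real (\<sigma> m) \<ge> real m" using seq_suble[OF \<sigma>] by simp
      ultimately have "real (\<sigma> m) + 1 > 1 / e" by linarith
      then have "1 < e * (real (\<sigma> m) + 1)" using e by (simp add: divide_less_eq mult.commute)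
      then have "1 / (real (\<sigma> m) + 1) < e" by (simp add: divide_less_eq mult.commute)
      then have "ennreal (1 + 1 / (real (\<sigma> m) + 1)) \<le> ennreal (1 + e)" by (intro ennreal_leI) simp
      also have "\<dots> = 1 + ennreal e" using e by (simp add: ennreal_plus)
      finally have le: "ennreal (1 + 1 / (real (\<sigma> m) + 1)) \<le> 1 + ennreal e" .
      have "m \<ge> N" unfolding m_def by simp
      then have "(\<Sum>A\<in>D'. SUP k\<in>A. ennreal \<bar>y k\<bar>) < ennreal (1 + 1 / (real (\<sigma> m) + 1))" by (rule N)
      then show "(\<Sum>A\<in>D'. SUP k\<in>A. ennreal \<bar>y k\<bar>) \<le> 1 + ennreal e"
        using le by (rule order.strict_implies_order[THEN order_trans])
    qed
    then show "(\<Sum>A\<in>D. SUP k\<in>A. ennreal \<bar>y k\<bar>) \<le> 1" using sD by simp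
  qed
  then show ?thesis using QP by blast
qed



lemma perturb:
  assumes yX: "y \<in> XF \<F>" and ext: "extreme_pt y (unit_ball_XF \<F>)"
    and D: "finite D" "\<And>k. k \<notin> D \<Longrightarrow> d k = 0" and nz: "d k0 \<noteq> 0"
    and n1: "normF \<F> (\<lambda>k. y k + d k) \<le> 1" and n2: "normF \<F> (\<lambda>k. y k - d k) \<le> 1"
  shows False
proof -
  define x where "x = (\<lambda>k. y k + d k)"
  define z where "z = (\<lambda>k. y k - d k)"
  have "x \<in> XF \<F>" by (rule finmod_XF[OF yX D(1)]) (simp add: x_def D(2))
  then have xK: "x \<in> unit_ball_XF \<F>" using n1 unfolding unit_ball_XF_def x_def by simp
  have "z \<in> XF \<F>" by (rule finmod_XF[OF yX D(1)]) (simp add: z_def D(2))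
  then have zK: "z \<in> unit_ball_XF \<F>" using n2 unfolding unit_ball_XF_def z_def by simp
  have "x \<noteq> y" using nz unfolding x_def by (auto simp: fun_eq_iff)
  moreover have "z \<noteq> y" using nz unfolding z_def by (auto simp: fun_eq_iff)
  moreover have "y = (\<lambda>i. (1 - 1/2) * x i + 1/2 * z i)"
    unfolding x_def z_def by (simp add: fun_eq_iff field_simps)
  moreover have "0 < (1/2::real)" "(1/2::real) < 1" by simp_all
  ultimately have "\<exists>x \<in> unit_ball_XF \<F>. \<exists>z \<in> unit_ball_XF \<F>. \<exists>t::real. x \<noteq> y \<and> z \<noteq> y \<and> 0 < t \<and> t < 1 \<and>
          y = (\<lambda>i. (1 - t) * x i + t * z i)" using xK zK by blast
  then show False using ext unfolding extreme_pt_def by blast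
qed

lemma SUP_scale:
  assumes "0 \<le> \<alpha>"
  shows "(SUP k\<in>A. ennreal \<bar>\<alpha> * y k\<bar>) = ennreal \<alpha> * (SUP k\<in>A. ennreal \<bar>y k\<bar>)"
proof -
  have "\<And>k. ennreal \<bar>\<alpha> * y k\<bar> = ennreal \<alpha> * ennreal \<bar>y k\<bar>"
    using assms by (simp add: abs_mult ennreal_mult)
  then show ?thesis by (simp add: SUP_mult_left_ennreal)
qed

lemma SP_scale_two:
  assumes P: "is_partition P" and AB: "A \<in> P" "B \<in> P" "A \<noteq> B"
    and ab: "0 \<le> \<alpha>" "0 \<le> \<beta>"
    and eq: "ennreal \<alpha> * (SUP k\<in>A. ennreal \<bar>y k\<bar>) + ennreal \<beta> * (SUP k\<in>B. ennreal \<bar>y k\<bar>)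
            = (SUP k\<in>A. ennreal \<bar>y k\<bar>) + (SUP k\<in>B. ennreal \<bar>y k\<bar>)"
  shows "SP P (\<lambda>k. if k \<in> A then \<alpha> * y k else if k \<in> B then \<beta> * y k else y k) = SP P y"
proof -
  define x where "x = (\<lambda>k. if k \<in> A then \<alpha> * y k else if k \<in> B then \<beta> * y k else y k)"
  define g where "g v C = (SUP k\<in>C. ennreal \<bar>v k\<bar>)" for v :: "nat \<Rightarrow> real" and C
  have dAB: "A \<inter> B = {}" using P AB unfolding is_partition_def by blast
  have split: "SP P v = infsum (g v) (P - {A, B}) + (g v A + g v B)" for v
  proof -
    have "P = (P - {A, B}) \<union> {A, B}" using AB by blast
    then have "SP P v = infsum (g v) ((P - {A, B}) \<union> {A, B})" unfolding SP_def g_def by simp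
    also have "\<dots> = infsum (g v) (P - {A, B}) + infsum (g v) {A, B}"
      by (rule infsum_Un_disjoint) auto
    also have "infsum (g v) {A, B} = g v A + g v B" using AB by simp
    finally show ?thesis .
  qed
  have rest: "infsum (g x) (P - {A, B}) = infsum (g y) (P - {A, B})"
  proof (rule infsum_cong)
    fix C assume C: "C \<in> P - {A, B}"
    then have "C \<inter> A = {}" "C \<inter> B = {}" using P AB unfolding is_partition_def by blast+
    then have "\<And>k. k \<in> C \<Longrightarrow> x k = y k" unfolding x_def by auto
    then show "g x C = g y C" unfolding g_def by (intro SUP_cong) auto
  qed
  have gA: "g x A = ennreal \<alpha> * g y A"
  proof -
    have "g x A = (SUP k\<in>A. ennreal \<bar>\<alpha> * y k\<bar>)" unfolding g_def x_def by (intro SUP_cong) auto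
    then show ?thesis using SUP_scale[OF ab(1)] unfolding g_def by simp
  qed
  have gB: "g x B = ennreal \<beta> * g y B"
  proof -
    have "g x B = (SUP k\<in>B. ennreal \<bar>\<beta> * y k\<bar>)" unfolding g_def x_def using dAB by (intro SUP_cong) auto
    then show ?thesis using SUP_scale[OF ab(2)] unfolding g_def by simp
  qed
  have "SP P x = infsum (g x) (P - {A, B}) + (g x A + g x B)" by (rule split)
  also have "\<dots> = infsum (g y) (P - {A, B}) + (g y A + g y B)"
    using rest gA gB eq unfolding g_def by simp
  also have "\<dots> = SP P y" by (rule split[symmetric])
  finally show ?thesis unfolding x_def .
qed

lemma hard_dir:
  assumes fin: "\<forall>A \<in> \<F>. finite A" and cf: "compact_family \<F>" and her: "hereditary \<F>"
    and cov: "\<Union>\<F> = UNIV" and yX: "y \<in> XF \<F>" and ext: "extreme_pt y (unit_ball_XF \<F>)"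
  shows "\<exists>G \<in> maximal_elems \<F>. \<exists>\<epsilon> :: nat \<Rightarrow> real.
        (\<forall>i \<in> G. \<epsilon> i \<in> {-1, 1}) \<and> (\<forall>i \<in> G. y i = \<epsilon> i) \<and> (\<forall>i. i \<notin> G \<longrightarrow> y i = 0)"
proof -
  have yK: "y \<in> unit_ball_XF \<F>" using ext unfolding extreme_pt_def by blast
  then have n1: "normF \<F> y \<le> 1" unfolding unit_ball_XF_def by simp
  obtain P where PP: "P \<in> partitions_in \<F>" and SPy: "SP P y \<le> 1"
    using attain[OF fin cf her cov n1] by blast
  have Pp: "is_partition P" and PF: "P \<subseteq> \<F>" using PP unfolding partitions_in_def by auto
  have yb: "\<And>k. \<bar>y k\<bar> \<le> 1" using ball_coord[OF yK] .
  define g where "g C = (SUP k\<in>C. ennreal \<bar>y k\<bar>)" for C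
  have gle: "g C \<le> 1" if "C \<in> P" for C
  proof -
    have "g C = (\<Sum>A\<in>{C}. SUP k\<in>A. ennreal \<bar>y k\<bar>)" unfolding g_def by simp
    also have "\<dots> \<le> SP P y" using that by (intro sum_le_SP) auto
    finally show ?thesis using SPy by simp
  qed
  have blk: "\<exists>A. A \<in> P \<and> k \<in> A" for k
  proof -
    have "k \<in> \<Union>P" using Pp unfolding is_partition_def by simp
    then show ?thesis by blast
  qed
  have claim1: False if A: "A \<in> P" and B: "B \<in> P" and AB: "A \<noteq> B" and a: "a \<in> A" "y a \<noteq> 0"
    and b: "b \<in> B" "y b \<noteq> 0" for A B a b
  proof -
    have dAB: "A \<inter> B = {}" using Pp A B AB unfolding is_partition_def by blast
    define ma where "ma = enn2real (g A)"
    define mb where "mb = enn2real (g B)"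
    have gA: "g A = ennreal ma" unfolding ma_def using gle[OF A]
      by (metis ennreal_enn2real ennreal_one_less_top le_less_trans less_top)
    have gB: "g B = ennreal mb" unfolding mb_def using gle[OF B]
      by (metis ennreal_enn2real ennreal_one_less_top le_less_trans less_top)
    have "ennreal \<bar>y a\<bar> \<le> g A" unfolding g_def using a by (intro SUP_upper)
    moreover have "ma \<ge> 0" unfolding ma_def by simp
    ultimately have "\<bar>y a\<bar> \<le> ma" unfolding gA by (auto simp: ennreal_le_iff2)
    then have ma: "ma > 0" using a by linarith
    have "ennreal \<bar>y b\<bar> \<le> g B" unfolding g_def using b by (intro SUP_upper)
    moreover have "mb \<ge> 0" unfolding mb_def by simp
    ultimately have "\<bar>y b\<bar> \<le> mb" unfolding gB by (auto simp: ennreal_le_iff2)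
    then have mb: "mb > 0" using b by linarith
    define t where "t = min ma mb / 2"
    define s where "s = t / ma"
    define r where "r = t / mb"
    have t: "t > 0" "t \<le> ma / 2" "t \<le> mb / 2" unfolding t_def using ma mb by auto
    have s: "0 < s" "s \<le> 1/2" "s * ma = t" unfolding s_def using t ma by (auto simp: field_simps)
    have r: "0 < r" "r \<le> 1/2" "r * mb = t" unfolding r_def using t mb by (auto simp: field_simps)
    define d where "d k = (if k \<in> A then s * y k else if k \<in> B then - r * y k else 0)" for k
    have Afin: "finite A" "finite B" using fin PF A B by auto
    have dD: "d k = 0" if "k \<notin> A \<union> B" for k using that unfolding d_def by auto
    have dnz: "d a \<noteq> 0" using a s unfolding d_def by simp
    have plus: "(\<lambda>k. y k + d k) = (\<lambda>k. if k \<in> A then (1 + s) * y k else if k \<in> B then (1 - r) * y k else y k)"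
      unfolding d_def by (auto simp: fun_eq_iff algebra_simps)
    have minus: "(\<lambda>k. y k - d k) = (\<lambda>k. if k \<in> A then (1 - s) * y k else if k \<in> B then (1 + r) * y k else y k)"
      unfolding d_def by (auto simp: fun_eq_iff algebra_simps)
    have e1: "ennreal (1 + s) * g A + ennreal (1 - r) * g B = g A + g B"
    proof -
      have "ennreal (1 + s) * g A + ennreal (1 - r) * g B = ennreal ((1 + s) * ma + (1 - r) * mb)"
        unfolding gA gB using s r ma mb by (simp add: ennreal_mult[symmetric] ennreal_plus[symmetric] del: ennreal_plus)
      also have "(1 + s) * ma + (1 - r) * mb = ma + mb" using s r by (simp add: algebra_simps)
      also have "ennreal (ma + mb) = g A + g B" unfolding gA gB using ma mb by (simp add: ennreal_plus)
      finally show ?thesis .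
    qed
    have e2: "ennreal (1 - s) * g A + ennreal (1 + r) * g B = g A + g B"
    proof -
      have "ennreal (1 - s) * g A + ennreal (1 + r) * g B = ennreal ((1 - s) * ma + (1 + r) * mb)"
        unfolding gA gB using s r ma mb by (simp add: ennreal_mult[symmetric] ennreal_plus[symmetric] del: ennreal_plus)
      also have "(1 - s) * ma + (1 + r) * mb = ma + mb" using s r by (simp add: algebra_simps)
      also have "ennreal (ma + mb) = g A + g B" unfolding gA gB using ma mb by (simp add: ennreal_plus)
      finally show ?thesis .
    qed
    have "SP P (\<lambda>k. y k + d k) = SP P y"
      unfolding plus by (rule SP_scale_two[OF Pp A B AB]) (use s r e1 in \<open>simp_all add: g_def\<close>)
    then have n1: "normF \<F> (\<lambda>k. y k + d k) \<le> 1" using normF_le_SP[OF PP] SPy by (metis order_trans)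
    have "SP P (\<lambda>k. y k - d k) = SP P y"
      unfolding minus by (rule SP_scale_two[OF Pp A B AB]) (use s r e2 in \<open>simp_all add: g_def\<close>)
    then have n2: "normF \<F> (\<lambda>k. y k - d k) \<le> 1" using normF_le_SP[OF PP] SPy by (metis order_trans)
    have "finite (A \<union> B)" using Afin by simp
    then show False by (rule perturb[OF yX ext _ dD dnz n1 n2])
  qed
  obtain G where G: "G \<in> P" and supp: "\<And>k. k \<notin> G \<Longrightarrow> y k = 0"
  proof (cases "\<exists>k. y k \<noteq> 0")
    case True
    then obtain k0 where k0: "y k0 \<noteq> 0" by blast
    obtain G where G: "G \<in> P" "k0 \<in> G" using blk by blast
    have "y k = 0" if "k \<notin> G" for k
    proof (rule ccontr)
      assume yk: "y k \<noteq> 0"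
      obtain C where C: "C \<in> P" "k \<in> C" using blk by blast
      have "C \<noteq> G" using C that by blast
      then show False using claim1[OF G(1) C(1) _ G(2) k0 C(2) yk] by blast
    qed
    then show ?thesis using that G by blast
  next
    case False
    obtain G where G: "G \<in> P" "0 \<in> G" using blk by blast
    then show ?thesis using that False by blast
  qed
  have GF: "G \<in> \<F>" using G PF by blast
  have one: "\<bar>y k\<bar> = 1" if kG: "k \<in> G" for k
  proof (rule ccontr)
    assume "\<bar>y k\<bar> \<noteq> 1"
    then have lt: "\<bar>y k\<bar> < 1" using yb[of k] by linarith
    define d where "d j = (if j = k then 1 - \<bar>y k\<bar> else 0)" for j
    have dD: "d j = 0" if "j \<notin> {k}" for j using that unfolding d_def by simp
    have dnz: "d k \<noteq> 0" using lt unfolding d_def by simp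
    have n1: "normF \<F> (\<lambda>j. y j + d j) \<le> 1"
    proof (rule box_normF[OF PP G])
      fix j show "j \<notin> G \<Longrightarrow> y j + d j = 0" using supp kG unfolding d_def by auto
      show "\<bar>y j + d j\<bar> \<le> 1" using yb[of j] lt unfolding d_def by (cases "j = k") auto
    qed
    have n2: "normF \<F> (\<lambda>j. y j - d j) \<le> 1"
    proof (rule box_normF[OF PP G])
      fix j show "j \<notin> G \<Longrightarrow> y j - d j = 0" using supp kG unfolding d_def by auto
      show "\<bar>y j - d j\<bar> \<le> 1" using yb[of j] lt unfolding d_def by (cases "j = k") auto
    qed
    have "finite {k}" by simp
    then show False by (rule perturb[OF yX ext _ dD dnz n1 n2])
  qed
  have maxl: "insert k G \<notin> \<F>" if kG: "k \<notin> G" for k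
  proof
    assume kGF: "insert k G \<in> \<F>"
    have QP: "{insert k G} \<union> {{j} |j. j \<notin> insert k G} \<union> {{}} \<in> partitions_in \<F>"
      by (rule std_partition[OF kGF her cov])
    define d where "d j = (if j = k then (1::real) else 0)" for j
    have dD: "d j = 0" if "j \<notin> {k}" for j using that unfolding d_def by simp
    have dnz: "d k \<noteq> 0" unfolding d_def by simp
    have yk: "y k = 0" using supp kG by blast
    have n1: "normF \<F> (\<lambda>j. y j + d j) \<le> 1"
    proof (rule box_normF[OF QP, of "insert k G"])
      show "insert k G \<in> {insert k G} \<union> {{j} |j. j \<notin> insert k G} \<union> {{}}" by simp
      fix j show "j \<notin> insert k G \<Longrightarrow> y j + d j = 0" using supp unfolding d_def by auto
      show "\<bar>y j + d j\<bar> \<le> 1" using yb[of j] yk unfolding d_def by (cases "j = k") auto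
    qed
    have n2: "normF \<F> (\<lambda>j. y j - d j) \<le> 1"
    proof (rule box_normF[OF QP, of "insert k G"])
      show "insert k G \<in> {insert k G} \<union> {{j} |j. j \<notin> insert k G} \<union> {{}}" by simp
      fix j show "j \<notin> insert k G \<Longrightarrow> y j - d j = 0" using supp unfolding d_def by auto
      show "\<bar>y j - d j\<bar> \<le> 1" using yb[of j] yk unfolding d_def by (cases "j = k") auto
    qed
    have "finite {k}" by simp
    then show False by (rule perturb[OF yX ext _ dD dnz n1 n2])
  qed
  have "G \<in> maximal_elems \<F>" unfolding maximal_elems_def using GF maxl by blast
  moreover have "\<forall>i \<in> G. y i \<in> {-1, 1}"
  proof
    fix i assume "i \<in> G"
    then have "\<bar>y i\<bar> = 1" by (rule one)
    then show "y i \<in> {-1, 1}" by (cases "y i < 0") auto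
  qed
  ultimately show ?thesis using supp by blast
qed


theorem mainTheorem10:
  fixes \<F> :: "nat set set" and y :: "nat \<Rightarrow> real"
  assumes "\<forall>A \<in> \<F>. finite A"
    and "compact_family \<F>"
    and "hereditary \<F>"
    and "\<Union>\<F> = UNIV"
    and "y \<in> XF \<F>"
  shows "extreme_pt y (unit_ball_XF \<F>) \<longleftrightarrow>
    (\<exists>F \<in> maximal_elems \<F>. \<exists>\<epsilon> :: nat \<Rightarrow> real.
        (\<forall>i \<in> F. \<epsilon> i \<in> {-1, 1}) \<and>
        (\<forall>i \<in> F. y i = \<epsilon> i) \<and> (\<forall>i. i \<notin> F \<longrightarrow> y i = 0))"
proof
  assume "extreme_pt y (unit_ball_XF \<F>)"
  then show "\<exists>F \<in> maximal_elems \<F>. \<exists>\<epsilon> :: nat \<Rightarrow> real.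
        (\<forall>i \<in> F. \<epsilon> i \<in> {-1, 1}) \<and>
        (\<forall>i \<in> F. y i = \<epsilon> i) \<and> (\<forall>i. i \<notin> F \<longrightarrow> y i = 0)"
    by (rule hard_dir[OF assms])
next
  assume "\<exists>F \<in> maximal_elems \<F>. \<exists>\<epsilon> :: nat \<Rightarrow> real.
        (\<forall>i \<in> F. \<epsilon> i \<in> {-1, 1}) \<and>
        (\<forall>i \<in> F. y i = \<epsilon> i) \<and> (\<forall>i. i \<notin> F \<longrightarrow> y i = 0)"
  then obtain G \<epsilon> where G: "G \<in> maximal_elems \<F>" and e: "\<forall>i \<in> G. \<epsilon> i \<in> {-1, 1}"
    and yG: "\<forall>i \<in> G. y i = \<epsilon> i" and y0: "\<forall>i. i \<notin> G \<longrightarrow> y i = 0" by blast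
  show "extreme_pt y (unit_ball_XF \<F>)"
    by (rule easy_dir[OF assms(3,4,5) G e yG y0])
qed

end
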